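(* Elements $g,h\in B_3$ are conjugate in $B_3$ if and only if $\phi(g)$ and $\phi(h)$ are conjugate in $\mathrm{SL}_2(\mathbb{Z})$ and $\epsilon(g)=\epsilon(h)$.
   Context: $B_3=\langle\sigma_1,\sigma_2:\sigma_1\sigma_2\sigma_1=\sigma_2\sigma_1\sigma_2\rangle$ is the braid group on three strands. The homomorphism $\phi:B_3\to\mathrm{SL}_2(\mathbb{Z})$ is defined by $\phi(\sigma_1)=\begin{bmatrix}1&1\\0&1\end{bmatrix}$ and $\phi(\sigma_2)=\begin{bmatrix}1&0\\-1&1\end{bmatrix}$. The map $\epsilon:B_3\to\mathbb{Z}$ is the abelianization homomorphism with $\epsilon(\sigma_1)=\epsilon(\sigma_2)=1$ (the exponent sum). *)

theory Defs
  imports "HOL-Analysis.Analysis"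
begin

text \<open>B_3 presented as words in the letters sigma_1^(+-1), sigma_2^(+-1), modulo the
  congruence generated by free cancellation and the braid relation.\<close>

datatype gen = S1 | S2

type_synonym letter = "gen \<times> bool"   (* (generator, is_inverse) *)
type_synonym word = "letter list"

definition inv_letter :: "letter \<Rightarrow> letter" where
  "inv_letter a = (fst a, \<not> snd a)"

definition inv_word :: "word \<Rightarrow> word" where
  "inv_word w = rev (map inv_letter w)"

inductive braid_eq :: "word \<Rightarrow> word \<Rightarrow> bool" where
  refl: "braid_eq w w"
| sym: "braid_eq u v \<Longrightarrow> braid_eq v u"
| trans: "braid_eq u v \<Longrightarrow> braid_eq v w \<Longrightarrow> braid_eq u w"
| cancel: "braid_eq (u @ [a, inv_letter a] @ v) (u @ v)"
| braid_rel: "braid_eq (u @ [(S1,False),(S2,False),(S1,False)] @ v)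
                       (u @ [(S2,False),(S1,False),(S2,False)] @ v)"

definition conj_B3 :: "word \<Rightarrow> word \<Rightarrow> bool" where
  "conj_B3 g h \<longleftrightarrow> (\<exists>w. braid_eq (w @ g @ inv_word w) h)"

definition mat2 :: "int \<Rightarrow> int \<Rightarrow> int \<Rightarrow> int \<Rightarrow> int^2^2" where
  "mat2 a b c d = (\<chi> i j. if i = 1 then (if j = 1 then a else b) else (if j = 1 then c else d))"

fun phi_letter :: "letter \<Rightarrow> int^2^2" where
  "phi_letter (S1, False) = mat2 1 1 0 1"
| "phi_letter (S1, True) = mat2 1 (-1) 0 1"
| "phi_letter (S2, False) = mat2 1 0 (-1) 1"
| "phi_letter (S2, True) = mat2 1 0 1 1"

definition phi :: "word \<Rightarrow> int^2^2" where
  "phi w = foldr (\<lambda>a M. phi_letter a ** M) w (mat 1)"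

definition epsilon :: "word \<Rightarrow> int" where
  "epsilon w = sum_list (map (\<lambda>a. if snd a then -1 else 1) w)"

definition conj_SL2Z :: "int^2^2 \<Rightarrow> int^2^2 \<Rightarrow> bool" where
  "conj_SL2Z A B \<longleftrightarrow> (\<exists>P Q. det P = 1 \<and> P ** Q = mat 1 \<and> P ** A ** Q = B)"

end

theory Submission
  imports Defs
begin


lemma mat2_mul[simp]: "mat2 a b c d ** mat2 e f g h = mat2 (a*e+b*g) (a*f+b*h) (c*e+d*g) (c*f+d*h)"
  by (simp add: mat2_def matrix_matrix_mult_def vec_eq_iff forall_2 sum_2)

lemma mat2_eq[simp]: "mat2 a b c d = mat2 a' b' c' d' \<longleftrightarrow> a=a' \<and> b=b' \<and> c=c' \<and> d=d'"
  by (auto simp add: mat2_def vec_eq_iff forall_2)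

lemma mat1_mat2: "(mat 1 :: int^2^2) = mat2 1 0 0 1"
  by (simp add: mat2_def mat_def vec_eq_iff forall_2)

lemma mat2_entries: "(M::int^2^2) = mat2 (M$1$1) (M$1$2) (M$2$1) (M$2$2)"
  by (simp add: mat2_def vec_eq_iff forall_2)

lemma det_mat2: "det (mat2 a b c d) = a*d - b*c"
  by (simp add: det_2 mat2_def)

lemma phi_Nil[simp]: "phi [] = mat2 1 0 0 1"
  by (simp add: phi_def mat1_mat2)

lemma phi_Cons[simp]: "phi (a#w) = phi_letter a ** phi w"
  by (simp add: phi_def)

lemma phi_append[simp]: "phi (u@v) = phi u ** phi v"
  by (induction u) (auto simp: matrix_mul_assoc mat1_mat2[symmetric] matrix_mul_lid)

lemma eps_Nil[simp]: "epsilon [] = 0" by (simp add: epsilon_def)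
lemma eps_Cons[simp]: "epsilon (a#w) = (if snd a then -1 else 1) + epsilon w" by (simp add: epsilon_def)
lemma eps_append[simp]: "epsilon (u@v) = epsilon u + epsilon v" by (simp add: epsilon_def)

lemma inv_inv[simp]: "inv_letter (inv_letter a) = a" by (simp add: inv_letter_def)
lemma inv_word_Nil[simp]: "inv_word [] = []" by (simp add: inv_word_def)
lemma inv_word_Cons[simp]: "inv_word (a#w) = inv_word w @ [inv_letter a]" by (simp add: inv_word_def)

lemma eps_inv[simp]: "epsilon (inv_word w) = - epsilon w"
  by (induction w) (auto simp: inv_letter_def)

lemma phi_letter_inv: "phi_letter a ** phi_letter (inv_letter a) = mat2 1 0 0 1"
  by (cases a; rename_tac g b; case_tac g; case_tac b) (auto simp: inv_letter_def)

lemma phi_letter_det: "det (phi_letter a) = 1"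
  by (cases a; rename_tac g b; case_tac g; case_tac b) (auto simp: det_mat2)

lemma det_phi: "det (phi w) = 1"
  by (induction w) (auto simp: det_mul phi_letter_det det_mat2)

lemma braid_phi: "braid_eq u v \<Longrightarrow> phi u = phi v"
proof (induction rule: braid_eq.induct)
  case (cancel u a v)
  have "phi_letter a ** (phi_letter (inv_letter a) ** phi v) = phi v"
    by (metis matrix_mul_assoc phi_letter_inv mat1_mat2 matrix_mul_lid)
  then show ?case by simp
next
  case (braid_rel u v)
  have "phi_letter (S1,False) ** (phi_letter (S2,False) ** (phi_letter (S1,False) ** phi v))
      = phi_letter (S2,False) ** (phi_letter (S1,False) ** (phi_letter (S2,False) ** phi v))"
    by (simp add: matrix_mul_assoc)
  then show ?case by simp
qed auto

lemma braid_eps: "braid_eq u v \<Longrightarrow> epsilon u = epsilon v"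
  by (induction rule: braid_eq.induct) (auto simp: inv_letter_def)

lemma bcong: "braid_eq u v \<Longrightarrow> braid_eq (p@u@q) (p@v@q)"
proof (induction arbitrary: p q rule: braid_eq.induct)
  case (refl w) then show ?case by (rule braid_eq.refl)
next
  case (sym u v) then show ?case by (blast intro: braid_eq.sym)
next
  case (trans u v w) then show ?case by (blast intro: braid_eq.trans)
next
  case (cancel u a v)
  show ?case using braid_eq.cancel[of "p@u" a "v@q"] by simp
next
  case (braid_rel u v)
  show ?case using braid_eq.braid_rel[of "p@u" "v@q"] by simp
qed

lemma bappL: "braid_eq u v \<Longrightarrow> braid_eq (p@u) (p@v)"
  using bcong[of u v p "[]"] by simp
lemma bappR: "braid_eq u v \<Longrightarrow> braid_eq (u@q) (v@q)"
  using bcong[of u v "[]" q] by simp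
lemma bapp2: "braid_eq u u' \<Longrightarrow> braid_eq v v' \<Longrightarrow> braid_eq (u@v) (u'@v')"
  by (meson bappL bappR braid_eq.trans)

lemma cancel1: "braid_eq ([a, inv_letter a] @ q) q"
  using braid_eq.cancel[of "[]" a q] by simp
lemma cancel2: "braid_eq ([inv_letter a, a] @ q) q"
  using cancel1[of "inv_letter a" q] by simp

lemma inv_right: "braid_eq (w @ inv_word w) []"
proof (induction w)
  case Nil then show ?case by (simp add: braid_eq.refl)
next
  case (Cons a w)
  have "braid_eq ([a] @ (w @ inv_word w) @ [inv_letter a]) ([a] @ [] @ [inv_letter a])"
    by (rule bcong[OF Cons])
  then have "braid_eq ((a#w) @ inv_word (a#w)) [a, inv_letter a]" by simp
  then show ?case using cancel1[of a "[]"] by (auto intro: braid_eq.trans)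
qed

lemma inv_left: "braid_eq (inv_word w @ w) []"
proof (induction w)
  case Nil then show ?case by (simp add: braid_eq.refl)
next
  case (Cons a w)
  have "braid_eq (inv_word w @ [inv_letter a, a] @ w) (inv_word w @ [] @ w)"
    by (rule bcong) (use cancel2[of a "[]"] in simp)
  then show ?case using Cons by (auto intro: braid_eq.trans)
qed


abbreviation "a1 \<equiv> (S1,False)"
abbreviation "a2 \<equiv> (S2,False)"
abbreviation "b1 \<equiv> (S1,True)"
abbreviation "b2 \<equiv> (S2,True)"

definition "Xw = [a1,a2,a1]"
definition "Yw = [a1,a2]"
definition "Dw = Yw @ Yw @ Yw"
definition "Di = inv_word Dw"

lemma braid': "braid_eq (u @ [a1,a2,a1] @ v) (u @ [a2,a1,a2] @ v)"
  by (rule braid_eq.braid_rel)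
lemma braid'': "braid_eq (u @ [a2,a1,a2] @ v) (u @ [a1,a2,a1] @ v)"
  by (rule braid_eq.sym, rule braid_eq.braid_rel)

lemma XX: "braid_eq (Xw @ Xw) Dw"
  using braid'[of "[a1,a2,a1]" "[]"] by (simp add: Xw_def Dw_def Yw_def)

lemma a1X: "braid_eq ([a1] @ Xw) (Xw @ [a2])"
  using braid'[of "[a1]" "[]"] by (simp add: Xw_def)
lemma a2X: "braid_eq ([a2] @ Xw) (Xw @ [a1])"
  using braid''[of "[]" "[a1]"] by (simp add: Xw_def)

lemma commD_pos: "\<not> snd l \<Longrightarrow> braid_eq ([l] @ Dw) (Dw @ [l])"
proof -
  assume "\<not> snd l"
  then have "l = a1 \<or> l = a2" by (cases l; rename_tac g b; case_tac g) auto
  moreover have "braid_eq ([a1] @ Xw @ Xw) (Xw @ Xw @ [a1])"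
  proof -
    have "braid_eq ([a1] @ Xw @ Xw) (Xw @ [a2] @ Xw)" using bappR[OF a1X, of Xw] by simp
    moreover have "braid_eq (Xw @ [a2] @ Xw) (Xw @ Xw @ [a1])" using bappL[OF a2X, of Xw] by simp
    ultimately show ?thesis by (rule braid_eq.trans)
  qed
  moreover have "braid_eq ([a2] @ Xw @ Xw) (Xw @ Xw @ [a2])"
  proof -
    have "braid_eq ([a2] @ Xw @ Xw) (Xw @ [a1] @ Xw)" using bappR[OF a2X, of Xw] by simp
    moreover have "braid_eq (Xw @ [a1] @ Xw) (Xw @ Xw @ [a2])" using bappL[OF a1X, of Xw] by simp
    ultimately show ?thesis by (rule braid_eq.trans)
  qed
  ultimately have "braid_eq ([l] @ Xw @ Xw) (Xw @ Xw @ [l])" by auto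
  moreover have "braid_eq ([l] @ Xw @ Xw) ([l] @ Dw)" using bappL[OF XX, of "[l]"] by simp
  moreover have "braid_eq (Xw @ Xw @ [l]) (Dw @ [l])" using bappR[OF XX, of "[l]"] by simp
  ultimately show ?thesis by (meson braid_eq.sym braid_eq.trans)
qed

lemmas [trans] = braid_eq.trans

lemma commD_letter: "braid_eq ([l] @ Dw) (Dw @ [l])"
proof (cases "snd l")
  case False then show ?thesis by (rule commD_pos)
next
  case True
  define m where "m = inv_letter l"
  have m: "\<not> snd m" "l = inv_letter m" using True by (cases l) (auto simp: m_def inv_letter_def)
  have c: "braid_eq ([m] @ Dw) (Dw @ [m])" by (rule commD_pos[OF m(1)])
  have "braid_eq ([l] @ Dw) ([l] @ Dw @ [m, l])"
    using bappL[OF cancel1[of m "[]"], of "[l] @ Dw"] m(2) by (simp add: braid_eq.sym)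
  also have "braid_eq ([l] @ Dw @ [m, l]) ([l] @ ([m] @ Dw) @ [l])"
    using bcong[OF braid_eq.sym[OF c], of "[l]" "[l]"] by simp
  also have "braid_eq ([l] @ ([m] @ Dw) @ [l]) (Dw @ [l])"
    using bappR[OF cancel2[of m "[]"], of "Dw @ [l]"] m(2) by simp
  finally show ?thesis .
qed


lemma commD: "braid_eq (x @ Dw) (Dw @ x)"
proof (induction x)
  case Nil then show ?case by (simp add: braid_eq.refl)
next
  case (Cons a x)
  have "braid_eq ([a] @ x @ Dw) ([a] @ Dw @ x)" using bappL[OF Cons] .
  also have "braid_eq ([a] @ Dw @ x) (Dw @ [a] @ x)" using bappR[OF commD_letter] by simp
  finally show ?case by simp
qed

lemma commDi: "braid_eq (x @ Di) (Di @ x)"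
proof -
  have "braid_eq (x @ Di) (Di @ Dw @ x @ Di)"
    using bappR[OF braid_eq.sym[OF inv_left[of Dw]], of "x @ Di"] by (simp add: Di_def)
  also have "braid_eq (Di @ Dw @ x @ Di) (Di @ x @ Dw @ Di)"
    using bcong[OF braid_eq.sym[OF commD[of x]], of Di Di] by simp
  also have "braid_eq (Di @ x @ Dw @ Di) (Di @ x)"
    using bappL[OF inv_right[of Dw], of "Di @ x"] by (simp add: Di_def)
  finally show ?thesis .
qed

definition Dpow :: "int \<Rightarrow> word" where
  "Dpow k = (if k \<ge> 0 then concat (replicate (nat k) Dw) else concat (replicate (nat (-k)) Di))"

lemma commDpow: "braid_eq (x @ Dpow k) (Dpow k @ x)"
proof -
  have A: "braid_eq (x @ concat (replicate n W)) (concat (replicate n W) @ x)"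
    if h: "\<And>y. braid_eq (y @ W) (W @ y)" for n W
  proof (induction n)
    case 0 then show ?case by (simp add: braid_eq.refl)
  next
    case (Suc n)
    have "braid_eq (x @ W @ concat (replicate n W)) (W @ x @ concat (replicate n W))"
      using bappR[OF h[of x], of "concat (replicate n W)"] by simp
    also have "braid_eq (W @ x @ concat (replicate n W)) (W @ concat (replicate n W) @ x)"
      using bappL[OF Suc] .
    finally show ?case by simp
  qed
  show ?thesis unfolding Dpow_def using A[OF commD] A[OF commDi] by auto
qed

lemma Dpow_succ: "braid_eq (Dw @ Dpow k) (Dpow (k+1))"
proof (cases "k \<ge> 0")
  case True
  then have "nat (k+1) = Suc (nat k)" by simp
  then show ?thesis using True by (simp add: Dpow_def braid_eq.refl)
next
  case False
  then have n: "nat (-k) = Suc (nat (-(k+1)))" by simp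
  have "Dpow k = Di @ Dpow (k+1)"
    using False by (simp add: Dpow_def n) 
  then show ?thesis using bappR[OF inv_right[of Dw], of "Dpow (k+1)"] by (simp add: Di_def)
qed

lemma Dpow_pred: "braid_eq (Di @ Dpow k) (Dpow (k-1))"
proof (cases "k \<le> 0")
  case True
  then have "nat (-(k-1)) = Suc (nat (-k))" by simp
  then show ?thesis using True by (auto simp add: Dpow_def braid_eq.refl)
next
  case False
  then have n: "nat k = Suc (nat (k-1))" by simp
  have "Dpow k = Dw @ Dpow (k-1)"
    using False by (simp add: Dpow_def n)
  then show ?thesis using bappR[OF inv_left[of Dw], of "Dpow (k-1)"] by (simp add: Di_def)
qed

lemma DpowD: "braid_eq (Dpow k @ Dw @ r) (Dpow (k+1) @ r)"
proof -
  have "braid_eq (Dpow k @ Dw) (Dpow (k+1))"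
    using braid_eq.trans[OF braid_eq.sym[OF commDpow[of Dw k]] Dpow_succ] .
  then show ?thesis using bappR by fastforce
qed


definition blk :: "bool \<Rightarrow> word" where "blk b = (if b then Xw@Yw@Yw else Xw@Yw)"

definition nfw :: "int \<Rightarrow> nat \<Rightarrow> bool list \<Rightarrow> bool \<Rightarrow> word" where
  "nfw k c bs e = Dpow k @ concat (replicate c Yw) @ concat (map blk bs) @ (if e then Xw else [])"

definition good :: "word \<Rightarrow> bool" where
  "good W \<longleftrightarrow> (\<forall>k c bs e. c \<le> 2 \<longrightarrow> (\<exists>k' c' bs' e'. c' \<le> 2 \<and> braid_eq (W @ nfw k c bs e) (nfw k' c' bs' e')))"

lemma good_app: "good A \<Longrightarrow> good B \<Longrightarrow> good (A@B)"
  unfolding good_def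
proof (intro allI impI)
  fix k c bs e assume A: "\<forall>k c bs e. c \<le> 2 \<longrightarrow> (\<exists>k' c' bs' e'. c' \<le> 2 \<and> braid_eq (A @ nfw k c bs e) (nfw k' c' bs' e'))"
    and B: "\<forall>k c bs e. c \<le> 2 \<longrightarrow> (\<exists>k' c' bs' e'. c' \<le> 2 \<and> braid_eq (B @ nfw k c bs e) (nfw k' c' bs' e'))"
    and c: "(c::nat) \<le> 2"
  obtain k1 c1 bs1 e1 where 1: "c1 \<le> 2" "braid_eq (B @ nfw k c bs e) (nfw k1 c1 bs1 e1)" using B c by blast
  obtain k2 c2 bs2 e2 where 2: "c2 \<le> 2" "braid_eq (A @ nfw k1 c1 bs1 e1) (nfw k2 c2 bs2 e2)" using A 1(1) by blast
  have "braid_eq ((A@B) @ nfw k c bs e) (A @ nfw k1 c1 bs1 e1)" using bappL[OF 1(2)] by simp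
  also note 2(2)
  finally show "\<exists>k' c' bs' e'. c' \<le> 2 \<and> braid_eq ((A @ B) @ nfw k c bs e) (nfw k' c' bs' e')"
    using 2(1) by blast
qed

lemma good_equiv: "braid_eq V W \<Longrightarrow> good W \<Longrightarrow> good V"
  unfolding good_def by (meson bappR braid_eq.trans)

lemma good_Di: "good Di"
  unfolding good_def
proof (intro allI impI)
  fix k c bs e assume "(c::nat) \<le> 2"
  have "braid_eq (Di @ nfw k c bs e) (nfw (k-1) c bs e)"
    unfolding nfw_def using bappR[OF Dpow_pred] by fastforce
  then show "\<exists>k' c' bs' e'. c' \<le> 2 \<and> braid_eq (Di @ nfw k c bs e) (nfw k' c' bs' e')"
    using \<open>c \<le> 2\<close> by blast
qed

lemma front: "braid_eq (W @ nfw k c bs e) (Dpow k @ W @ concat (replicate c Yw) @ concat (map blk bs) @ (if e then Xw else []))"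
  unfolding nfw_def using bappR[OF commDpow[of W k]] by fastforce

lemma good_Y: "good Yw"
  unfolding good_def
proof (intro allI impI)
  fix k c bs e assume c: "(c::nat) \<le> 2"
  let ?R = "concat (map blk bs) @ (if e then Xw else [])"
  show "\<exists>k' c' bs' e'. c' \<le> 2 \<and> braid_eq (Yw @ nfw k c bs e) (nfw k' c' bs' e')"
  proof (cases "c < 2")
    case True
    have "braid_eq (Yw @ nfw k c bs e) (nfw k (Suc c) bs e)"
      using front[of Yw k c bs e] by (simp add: nfw_def replicate_app_Cons_same)
    then show ?thesis using True by (intro exI[of _ k] exI[of _ "Suc c"]) auto
  next
    case False
    then have "c = 2" using c by simp
    then have "braid_eq (Yw @ nfw k c bs e) (Dpow k @ Dw @ ?R)"
      using front[of Yw k c bs e] by (simp add: Dw_def numeral_2_eq_2)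
    also have "braid_eq (Dpow k @ Dw @ ?R) (nfw (k+1) 0 bs e)"
      using DpowD[of k ?R] by (simp add: nfw_def)
    finally show ?thesis by blast
  qed
qed

lemma good_X: "good Xw"
  unfolding good_def
proof (intro allI impI)
  fix k c bs e assume c: "(c::nat) \<le> 2"
  let ?E = "(if e then Xw else [])"
  have F: "braid_eq (Xw @ nfw k c bs e) (Dpow k @ Xw @ concat (replicate c Yw) @ concat (map blk bs) @ ?E)"
    by (rule front)
  show "\<exists>k' c' bs' e'. c' \<le> 2 \<and> braid_eq (Xw @ nfw k c bs e) (nfw k' c' bs' e')"
  proof (cases c)
    case 0
    show ?thesis
    proof (cases bs)
      case Nil
      show ?thesis
      proof (cases e)
        case True
        have "braid_eq (Dpow k @ Xw @ Xw @ []) (Dpow k @ Dw @ [])" using bappL[OF XX, of "Dpow k"] by simp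
        also have "braid_eq (Dpow k @ Dw @ []) (nfw (k+1) 0 [] False)" using DpowD[of k "[]"] by (simp add: nfw_def)
        finally have G: "braid_eq (Dpow k @ Xw @ Xw @ []) (nfw (k+1) 0 [] False)" .
        from F have F': "braid_eq (Xw @ nfw k c bs e) (Dpow k @ Xw @ Xw @ [])" using 0 Nil True by simp
        show ?thesis using braid_eq.trans[OF F' G] by blast
      next
        case False
        then show ?thesis using F 0 Nil by (intro exI[of _ k] exI[of _ 0] exI[of _ "[]"] exI[of _ True]) (simp add: nfw_def)
      qed
    next
      case (Cons b bs')
      let ?a = "if b then 2 else (1::nat)"
      have bl: "blk b = Xw @ concat (replicate ?a Yw)" by (simp add: blk_def numeral_2_eq_2)
      let ?R = "concat (replicate ?a Yw) @ concat (map blk bs') @ ?E"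
      have "braid_eq (Dpow k @ Xw @ Xw @ ?R) (Dpow k @ Dw @ ?R)" using bcong[OF XX, of "Dpow k" ?R] by simp
      also have "braid_eq (Dpow k @ Dw @ ?R) (nfw (k+1) ?a bs' e)" using DpowD[of k ?R] by (simp add: nfw_def)
      finally have "braid_eq (Xw @ nfw k c bs e) (nfw (k+1) ?a bs' e)"
        using F 0 Cons bl by (auto intro: braid_eq.trans)
      then show ?thesis by (intro exI[of _ "k+1"] exI[of _ ?a] exI[of _ bs'] exI[of _ e]) auto
    qed
  next
    case (Suc c1)
    then have "c = 1 \<or> c = 2" using c by auto
    then show ?thesis
    proof
      assume "c = 1"
      then have "braid_eq (Xw @ nfw k c bs e) (nfw k 0 (False#bs) e)" using F by (simp add: nfw_def blk_def)
      then show ?thesis by blast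
    next
      assume "c = 2"
      then have "braid_eq (Xw @ nfw k c bs e) (nfw k 0 (True#bs) e)" using F by (simp add: nfw_def blk_def numeral_2_eq_2)
      then show ?thesis by blast
    qed
  qed
qed

lemma letter_Di: "braid_eq (Dw@[l]) W \<Longrightarrow> braid_eq [l] (Di@W)"
proof -
  assume h: "braid_eq (Dw@[l]) W"
  have "braid_eq [l] (Di@Dw@[l])" using bappR[OF inv_left[of Dw], of "[l]"] by (simp add: Di_def braid_eq.sym)
  also have "braid_eq (Di@Dw@[l]) (Di@W)" using bappL[OF h] .
  finally show ?thesis .
qed

lemma good_letter: "good [l]"
proof -
  have L: "l = a1 \<or> l = b1 \<or> l = a2 \<or> l = b2"
    by (cases l; rename_tac g b; case_tac g; case_tac b) auto
  have gXY: "good (Yw@Yw@Xw)" "good (Xw@Yw)" "good (Xw@Yw@Yw)" "good (Yw@Xw)"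
    by (auto intro!: good_app good_X good_Y)
  have "braid_eq (Dw@[l]) (Yw@Yw@Xw) \<and> good (Yw@Yw@Xw) \<or> braid_eq (Dw@[l]) (Xw@Yw) \<and> good (Xw@Yw)
      \<or> braid_eq (Dw@[l]) (Xw@Yw@Yw) \<and> good (Xw@Yw@Yw) \<or> braid_eq (Dw@[l]) (Yw@Xw) \<and> good (Yw@Xw)"
  using L proof (elim disjE)
    assume l: "l = a1"
    then show ?thesis using gXY by (simp add: l Dw_def Yw_def Xw_def braid_eq.refl)
  next
    assume l: "l = b1"
    have "braid_eq (Dw@[l]) (Xw@Xw@[l])" using bappR[OF braid_eq.sym[OF XX], of "[l]"] by simp
    also have "braid_eq (Xw@Xw@[l]) (Xw@Yw)"
      using braid_eq.cancel[of "[a1,a2,a1,a1,a2]" a1 "[]"]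
      by (simp add: l Xw_def Yw_def inv_letter_def)
    finally show ?thesis using gXY by blast
  next
    assume l: "l = a2"
    have "braid_eq (Dw@[l]) (Xw@Xw@[l])" using bappR[OF braid_eq.sym[OF XX], of "[l]"] by simp
    also have "Xw@Xw@[l] = Xw@Yw@Yw" by (simp add: l Xw_def Yw_def)
    finally show ?thesis using gXY by simp
  next
    assume l: "l = b2"
    have "braid_eq (Dw@[l]) (Yw@Xw)"
      using braid_eq.cancel[of "[a1,a2,a1,a2,a1]" a2 "[]"]
      by (simp add: l Dw_def Xw_def Yw_def inv_letter_def)
    then show ?thesis using gXY by blast
  qed
  then show ?thesis using letter_Di good_equiv good_app good_Di by meson
qed

lemma nf_exists: "\<exists>k c bs e. c \<le> 2 \<and> braid_eq u (nfw k c bs e)"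
proof (induction u)
  case Nil
  have "nfw 0 0 [] False = []" by (simp add: nfw_def Dpow_def)
  then show ?case by (metis braid_eq.refl le0)
next
  case (Cons l u)
  then obtain k c bs e where h: "c \<le> 2" "braid_eq u (nfw k c bs e)" by blast
  obtain k' c' bs' e' where h2: "c' \<le> 2" "braid_eq ([l] @ nfw k c bs e) (nfw k' c' bs' e')"
    using good_letter[of l] h(1) unfolding good_def by blast
  have "braid_eq ([l] @ u) ([l] @ nfw k c bs e)" by (rule bappL[OF h(2)])
  then have "braid_eq (l#u) (nfw k' c' bs' e')" using h2(2) by (simp add: braid_eq.trans)
  then show ?case using h2(1) by blast
qed


lemma phi_X: "phi Xw = mat2 0 1 (-1) 0" by (simp add: Xw_def)
lemma phi_Y: "phi Yw = mat2 0 1 (-1) 1" by (simp add: Yw_def)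
lemma phi_D: "phi Dw = mat2 (-1) 0 0 (-1)" by (simp add: Dw_def phi_Y)
lemma phi_Di: "phi Di = mat2 (-1) 0 0 (-1)" by (simp add: Di_def Dw_def Yw_def inv_letter_def)
lemma eps_D: "epsilon Dw = 6" by (simp add: Dw_def Yw_def)
lemma eps_Di: "epsilon Di = -6" by (simp add: Di_def eps_D)

lemma phi_rep: "phi W = mat2 (-1) 0 0 (-1) \<Longrightarrow> \<exists>t. (t = 1 \<or> t = -1) \<and> phi (concat (replicate n W)) = mat2 t 0 0 t"
proof (induction n)
  case 0 then show ?case by auto
next
  case (Suc n)
  then obtain t where "t = 1 \<or> t = -1" "phi (concat (replicate n W)) = mat2 t 0 0 t" by blast
  then show ?case using Suc.prems by (intro exI[of _ "-t"]) auto
qed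

lemma eps_rep: "epsilon (concat (replicate n W)) = int n * epsilon W"
  by (induction n) (auto simp: algebra_simps)

lemma phi_Dpow: "\<exists>t. (t = 1 \<or> t = -1) \<and> phi (Dpow k) = mat2 t 0 0 t"
  unfolding Dpow_def using phi_rep[OF phi_D] phi_rep[OF phi_Di] by auto

lemma eps_Dpow: "epsilon (Dpow k) = 6 * k"
  unfolding Dpow_def by (auto simp: eps_rep eps_D eps_Di)

lemma phi_blk: "phi (blk b) = (if b then mat2 (-1) 0 1 (-1) else mat2 (-1) 1 0 (-1))"
  by (simp add: blk_def phi_X phi_Y)

lemma phi_blocks: "bs \<noteq> [] \<Longrightarrow> \<exists>s a b c d. (s = 1 \<or> s = -1) \<and> a \<ge> 1 \<and> d \<ge> 1 \<and> b \<le> 0 \<and> c \<le> 0 \<and> b + c \<le> -1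
   \<and> phi (concat (map blk bs)) = mat2 (s*a) (s*b) (s*c) (s*d)"
proof (induction bs)
  case Nil then show ?case by simp
next
  case (Cons x bs)
  show ?case
  proof (cases "bs = []")
    case True
    then show ?thesis
    proof (cases x)
      case True then show ?thesis using \<open>bs = []\<close>
        by (intro exI[of _ "-1"] exI[of _ 1] exI[of _ 0] exI[of _ "-1"] exI[of _ 1]) (simp add: phi_blk)
    next
      case False then show ?thesis using \<open>bs = []\<close>
        by (intro exI[of _ "-1"] exI[of _ 1] exI[of _ "-1"] exI[of _ 0] exI[of _ 1]) (simp add: phi_blk)
    qed
  next
    case False
    then obtain s a b c d where h: "(s = 1 \<or> s = -1)" "a \<ge> 1" "d \<ge> 1" "b \<le> 0" "c \<le> 0" "b + c \<le> -1"
      "phi (concat (map blk bs)) = mat2 (s*a) (s*b) (s*c) (s*d)" using Cons.IH by blast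
    show ?thesis
    proof (cases x)
      case True
      show ?thesis using h True
        by (intro exI[of _ "-s"] exI[of _ a] exI[of _ b] exI[of _ "c - a"] exI[of _ "d - b"]) (auto simp: phi_blk algebra_simps)
    next
      case False
      show ?thesis using h False
        by (intro exI[of _ "-s"] exI[of _ "a - c"] exI[of _ "b - d"] exI[of _ c] exI[of _ d]) (auto simp: phi_blk algebra_simps)
    qed
  qed
qed

lemma phi_Ypow: "c \<le> 2 \<Longrightarrow> phi (concat (replicate c Yw)) = (if c = 0 then mat2 1 0 0 1 else if c = 1 then mat2 0 1 (-1) 1 else mat2 (-1) 1 (-1) 0)"
proof -
  assume "c \<le> 2"
  then have "c = 0 \<or> c = 1 \<or> c = 2" by auto
  then show ?thesis by (auto simp: phi_Y numeral_2_eq_2)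
qed

lemma rest_trivial:
  assumes c: "c \<le> 2" and t: "t = 1 \<or> t = -1"
    and h: "phi (concat (replicate c Yw) @ concat (map blk bs) @ (if e then Xw else [])) = mat2 t 0 0 t"
  shows "c = 0 \<and> bs = [] \<and> \<not> e"
proof (cases "bs = []")
  case True
  have "c = 0 \<or> c = 1 \<or> c = 2" using c by auto
  then show ?thesis using h t True by (cases e) (auto simp: phi_Ypow phi_X phi_Y)
next
  case False
  then obtain s a b c' d where hb: "(s = 1 \<or> s = -1)" "a \<ge> 1" "d \<ge> 1" "b \<le> 0" "c' \<le> 0" "b + c' \<le> -1"
      "phi (concat (map blk bs)) = mat2 (s*a) (s*b) (s*c') (s*d)" using phi_blocks by blast
  have "c = 0 \<or> c = 1 \<or> c = 2" using c by auto
  then have False using h t hb(1-6) by (cases e) (auto simp: phi_Ypow phi_X phi_Y hb(7))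
  then show ?thesis ..
qed


lemma scal_inv:
  assumes "mat2 t 0 0 t ** M = mat2 1 0 0 1" "t = 1 \<or> t = -1"
  shows "M = mat2 t 0 0 t"
proof -
  obtain a b c d where "M = mat2 a b c d" using mat2_entries by blast
  then show ?thesis using assms by auto
qed

lemma trivial_kernel:
  assumes p: "phi z = mat2 1 0 0 1" and e: "epsilon z = 0"
  shows "braid_eq z []"
proof -
  obtain k c bs e' where h: "c \<le> 2" "braid_eq z (nfw k c bs e')" using nf_exists by blast
  obtain t where t: "t = 1 \<or> t = -1" "phi (Dpow k) = mat2 t 0 0 t" using phi_Dpow by blast
  let ?R = "concat (replicate c Yw) @ concat (map blk bs) @ (if e' then Xw else [])"
  have "phi (nfw k c bs e') = mat2 1 0 0 1" using braid_phi[OF h(2)] p by simp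
  then have "mat2 t 0 0 t ** phi ?R = mat2 1 0 0 1" using t(2) by (simp add: nfw_def)
  then have "phi ?R = mat2 t 0 0 t"
    using t(1) scal_inv by blast
  then have r: "c = 0 \<and> bs = [] \<and> \<not> e'" using rest_trivial[OF h(1) t(1)] by blast
  then have nf: "nfw k c bs e' = Dpow k" by (simp add: nfw_def)
  have "epsilon (Dpow k) = 0" using braid_eps[OF h(2)] e nf by simp
  then have "k = 0" by (simp add: eps_Dpow)
  then have "Dpow k = []" by (simp add: Dpow_def)
  then show ?thesis using h(2) nf by simp
qed

lemma injective:
  assumes "phi u = phi v" "epsilon u = epsilon v"
  shows "braid_eq u v"
proof -
  have "phi (v @ inv_word v) = mat2 1 0 0 1" using braid_phi[OF inv_right[of v]] by simp
  then have "phi (u @ inv_word v) = mat2 1 0 0 1" using assms(1) by simp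
  moreover have "epsilon (u @ inv_word v) = 0" using assms(2) by simp
  ultimately have z: "braid_eq (u @ inv_word v) []" by (rule trivial_kernel)
  have "braid_eq u (u @ inv_word v @ v)"
    using bappL[OF inv_left[of v], of u] by (simp add: braid_eq.sym)
  also have "braid_eq (u @ inv_word v @ v) v" using bappR[OF z, of v] by simp
  finally show ?thesis .
qed

definition S1pow :: "int \<Rightarrow> word" where
  "S1pow q = (if q \<ge> 0 then replicate (nat q) a1 else replicate (nat (-q)) b1)"

lemma phi_S1pow: "phi (S1pow q) = mat2 1 q 0 1"
proof -
  have A: "phi (replicate n a1) = mat2 1 (int n) 0 1" for n by (induction n) auto
  have B: "phi (replicate n b1) = mat2 1 (- int n) 0 1" for n by (induction n) auto
  show ?thesis unfolding S1pow_def using A B by auto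
qed

lemma surjective: "a*d - b*c = 1 \<Longrightarrow> \<exists>w. phi w = mat2 a b c d"
proof (induction "nat \<bar>c\<bar>" arbitrary: a b c d rule: less_induct)
  case less
  show ?case
  proof (cases "c = 0")
    case True
    then have "a*d = 1" using less.prems by simp
    then have "(a = 1 \<and> d = 1) \<or> (a = -1 \<and> d = -1)" by (simp add: zmult_eq_1_iff)
    then show ?thesis
    proof
      assume "a = 1 \<and> d = 1"
      then show ?thesis using True phi_S1pow[of b] by auto
    next
      assume "a = -1 \<and> d = -1"
      then have "phi (Dw @ S1pow (-b)) = mat2 a b c d" using True by (simp add: phi_D phi_S1pow)
      then show ?thesis by blast
    qed
  next
    case False
    define q where "q = a div c"
    define r where "r = a mod c"
    have a: "a = q*c + r" unfolding q_def r_def by simp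
    have "\<bar>r\<bar> < \<bar>c\<bar>" unfolding r_def using False by (rule abs_mod_less)
    then have lt: "nat \<bar>r\<bar> < nat \<bar>c\<bar>" by simp
    have "(-c)*(b - q*d) - (-d)*r = 1" using less.prems a by (simp add: algebra_simps)
    then obtain w where w: "phi w = mat2 (-c) (-d) r (b - q*d)" using less.hyps[OF lt] by blast
    have "phi (S1pow q @ Xw @ w) = mat2 a b c d" using a by (simp add: phi_S1pow phi_X w algebra_simps)
    then show ?thesis by blast
  qed
qed

theorem proposition2p5:
  fixes g h :: word
  shows "conj_B3 g h \<longleftrightarrow> conj_SL2Z (phi g) (phi h) \<and> epsilon g = epsilon h"
proof
  assume "conj_B3 g h"
  then obtain w where w: "braid_eq (w @ g @ inv_word w) h" unfolding conj_B3_def by blast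
  have pq: "phi w ** phi (inv_word w) = mat 1"
    using braid_phi[OF inv_right[of w]] by (simp add: mat1_mat2)
  have "phi w ** phi g ** phi (inv_word w) = phi h"
    using braid_phi[OF w] by (simp add: matrix_mul_assoc)
  then have "conj_SL2Z (phi g) (phi h)" unfolding conj_SL2Z_def using pq det_phi by blast
  moreover have "epsilon g = epsilon h" using braid_eps[OF w] by simp
  ultimately show "conj_SL2Z (phi g) (phi h) \<and> epsilon g = epsilon h" ..
next
  assume "conj_SL2Z (phi g) (phi h) \<and> epsilon g = epsilon h"
  then obtain P Q where PQ: "det P = 1" "P ** Q = mat 1" "P ** phi g ** Q = phi h"
    and e: "epsilon g = epsilon h" unfolding conj_SL2Z_def by blast
  have "P$1$1 * P$2$2 - P$1$2 * P$2$1 = 1" using PQ(1) by (simp add: det_2)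
  then obtain w where w: "phi w = P" using surjective mat2_entries[of P] by metis
  have ql: "phi (inv_word w) ** P = mat 1"
    using braid_phi[OF inv_left[of w]] w by (simp add: mat1_mat2)
  have "Q = phi (inv_word w)"
  proof -
    have "Q = (phi (inv_word w) ** P) ** Q" using ql by (simp add: matrix_mul_lid)
    also have "\<dots> = phi (inv_word w) ** (P ** Q)" by (simp add: matrix_mul_assoc)
    also have "\<dots> = phi (inv_word w)" using PQ(2) by (simp add: matrix_mul_rid)
    finally show ?thesis .
  qed
  then have "phi (w @ g @ inv_word w) = phi h" using PQ(3) w by (simp add: matrix_mul_assoc)
  moreover have "epsilon (w @ g @ inv_word w) = epsilon h" using e by simp
  ultimately have "braid_eq (w @ g @ inv_word w) h" by (rule injective)
  then show "conj_B3 g h" unfolding conj_B3_def by blast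
qed


end
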